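(* Let $\omega=SSw$ be an attack cycle starting with two letters S, where $w=w_1\cdots w_\nu$ with $w_\nu=H$, and let $X_0=0$, $X_i=X_{i-1}+1$ if $w_i=S$, $X_i=X_{i-1}-1$ if $w_i=H$. Let $H(\omega)$ be the number of indices $1\le i\le\nu$ with $X_i<n_1-2$ and $X_i<X_{i-1}$. Then $$\mathbb{E}[H(\omega)\mid \omega=SS\ldots]=\frac{p}{p-q}\Bigl(1-\Bigl(\frac qp\Bigr)^{n_1-1}\Bigr).$$
   Context: Honest hashrate $p$, attacker hashrate $q$, $p+q=1$, $0<q<p$; $n_1\ge 2$ is an integer (the maximal uncle–nephew distance in Ethereum). Attack cycles starting with SS are the words $SSw'H$ with $w'$ a Dyck word over $\{S,H\}$, with $\mathbb{P}[SSw'H]=q^2p(pq)^{|w'|}$ ($|w'|$ half the length of $w'$); equivalently, conditional on starting with SS, the path $(X_i)$ is a random walk from $0$ with up-steps of probability $q$ and down-steps of probability $p$, stopped at its first visit to $-1$ (at time $\nu$). *)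

theory Defs
  imports "HOL-Analysis.Analysis"
begin

text \<open>Letters of a block sequence: S (selfish/attacker block), H (honest block).\<close>
datatype letter = S | H

fun step :: "letter \<Rightarrow> int" where
  "step S = 1"
| "step H = -1"

definition height :: "letter list \<Rightarrow> int" where
  "height w = sum_list (map step w)"

definition dyck :: "letter list \<Rightarrow> bool" where
  "dyck w \<longleftrightarrow> (\<forall>i\<le>length w. height (take i w) \<ge> 0) \<and> height w = 0"

definition SS_cycles :: "letter list set" where
  "SS_cycles = {[S, S] @ w' @ [H] | w'. dyck w'}"

definition cycle_prob :: "real \<Rightarrow> real \<Rightarrow> letter list \<Rightarrow> real" where
  "cycle_prob p q \<omega> = q^2 * p * (p * q) ^ ((length \<omega> - 3) div 2)"

text \<open>For \<omega> = SS w with w = w_1 ... w_\<nu>: X_i is the height of the first i letters of w.\<close>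
definition Xpos :: "letter list \<Rightarrow> nat \<Rightarrow> int" where
  "Xpos \<omega> i = height (take i (drop 2 \<omega>))"

definition Hcount :: "nat \<Rightarrow> letter list \<Rightarrow> nat" where
  "Hcount n1 \<omega> = card {i \<in> {1..length \<omega> - 2}.
      Xpos \<omega> i < int n1 - 2 \<and> Xpos \<omega> i < Xpos \<omega> (i - 1)}"

end

theory Submission
  imports Defs
begin


lemma height_Nil[simp]: "height [] = 0" by (simp add: height_def)
lemma height_Cons[simp]: "height (x # w) = step x + height w" by (simp add: height_def)
lemma height_append[simp]: "height (u @ v) = height u + height v" by (simp add: height_def)

definition Fw :: "letter list set" where "Fw = {w' @ [H] | w'. dyck w'}"

lemma Fw_iff: "w \<in> Fw \<longleftrightarrow> height w = -1 \<and> (\<forall>i<length w. 0 \<le> height (take i w))"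
proof
  assume "w \<in> Fw"
  then obtain w' where w: "w = w' @ [H]" "dyck w'" unfolding Fw_def by blast
  show "height w = -1 \<and> (\<forall>i<length w. 0 \<le> height (take i w))"
  proof safe
    show "height w = -1" using w by (simp add: dyck_def)
    fix i assume "i < length w"
    then have "i \<le> length w'" using w by simp
    then show "0 \<le> height (take i w)" using w by (simp add: dyck_def)
  qed
next
  assume a: "height w = -1 \<and> (\<forall>i<length w. 0 \<le> height (take i w))"
  then have "w \<noteq> []" by auto
  define b where "b = butlast w"
  have wb: "w = b @ [last w]" using \<open>w \<noteq> []\<close> b_def by simp
  have "0 \<le> height b"
    using a[THEN conjunct2, rule_format, of "length b"] wb
    by (metis append_eq_conv_conj length_append_singleton lessI)
  moreover have "height b + step (last w) = -1" using a wb
    by (metis add.right_neutral height_Cons height_Nil height_append)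
  ultimately have l: "last w = H" "height b = 0"
    by (cases "last w"; simp)+
  have "dyck b" unfolding dyck_def
  proof safe
    fix i assume "i \<le> length b"
    then have "take i w = take i b" "i < length w"
      by (subst wb; simp)+
    then show "0 \<le> height (take i b)" using a by auto
  qed (use l in auto)
  moreover have "w = b @ [H]" using wb l by simp
  ultimately show "w \<in> Fw" unfolding Fw_def by blast
qed

lemma step_cases: "step x = 1 \<or> step x = -1" by (cases x) auto

lemma ivt_height:
  assumes "n \<le> length r" "height (take n r) \<le> c" "c \<le> 0"
  shows "\<exists>k\<le>n. height (take k r) = c"
  using assms
proof (induction n)
  case 0
  then show ?case by auto
next
  case (Suc n)
  show ?case
  proof (cases "height (take n r) \<le> c")
    case True
    then show ?thesis using Suc by (metis Suc_leD le_Suc_eq)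
  next
    case False
    have "take (Suc n) r = take n r @ [r ! n]" using Suc.prems by (simp add: take_Suc_conv_app_nth)
    then have "height (take (Suc n) r) = height (take n r) + step (r ! n)" by simp
    then have "height (take (Suc n) r) = c" using False Suc.prems step_cases[of "r ! n"] by auto
    then show ?thesis by blast
  qed
qed

lemma Fw_ne: "w \<in> Fw \<Longrightarrow> w \<noteq> []"
  by (auto simp: Fw_iff)

lemma H_in_Fw: "[H] \<in> Fw"
  by (auto simp: Fw_iff)

lemma height_take_append: "height (take j (u @ v)) = height (take j u) + height (take (j - length u) v)"
  by (simp add: take_append)

lemma Cons_in_Fw: "u \<in> Fw \<Longrightarrow> v \<in> Fw \<Longrightarrow> S # u @ v \<in> Fw"
  unfolding Fw_iff
proof safe
  assume u: "height u = -1" "\<forall>i<length u. 0 \<le> height (take i u)"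
    and v: "height v = -1" "\<forall>i<length v. 0 \<le> height (take i v)"
  show "height (S # u @ v) = -1" using u v by simp
  fix i assume i: "i < length (S # u @ v)"
  show "0 \<le> height (take i (S # u @ v))"
  proof (cases i)
    case 0 then show ?thesis by simp
  next
    case (Suc j)
    have h: "height (take i (S # u @ v)) = 1 + height (take j u) + height (take (j - length u) v)"
      using Suc by (simp add: height_take_append)
    show ?thesis
    proof (cases "j < length u")
      case True
      then show ?thesis using h u by simp
    next
      case False
      then have "j - length u < length v" using i Suc by simp
      then show ?thesis using h u v False by simp
    qed
  qed
qed

lemma Fw_decomp:
  assumes "w \<in> Fw" "w \<noteq> [H]"
  shows "\<exists>u v. u \<in> Fw \<and> v \<in> Fw \<and> w = S # u @ v"
proof -
  have hw: "height w = -1" and pw: "\<And>i. i < length w \<Longrightarrow> 0 \<le> height (take i w)"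
    using assms(1) by (auto simp: Fw_iff)
  obtain x r where wr: "w = x # r" using Fw_ne[OF assms(1)] by (cases w) auto
  have "x = S"
  proof (rule ccontr)
    assume "x \<noteq> S"
    then have "x = H" by (cases x) auto
    have "r \<noteq> []" using assms(2) wr \<open>x = H\<close> by auto
    then have "1 < length w" using wr by (cases r) auto
    then have "0 \<le> height (take 1 w)" using pw by blast
    then show False using wr \<open>x = H\<close> by simp
  qed
  have hr: "height r = -2" using hw wr \<open>x = S\<close> by simp
  have pr: "\<And>j. j < length r \<Longrightarrow> -1 \<le> height (take j r)"
  proof -
    fix j assume "j < length r"
    then have "Suc j < length w" using wr by simp
    then have "0 \<le> height (take (Suc j) w)" using pw by blast
    then show "-1 \<le> height (take j r)" using wr \<open>x = S\<close> by simp
  qed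
  have ex: "\<exists>k. k \<le> length r \<and> height (take k r) = -1"
    using ivt_height[of "length r" r "-1"] hr by auto
  define k where "k = (LEAST k. k \<le> length r \<and> height (take k r) = -1)"
  have k: "k \<le> length r" "height (take k r) = -1"
    using LeastI_ex[OF ex] unfolding k_def by auto
  have kmin: "height (take i r) \<noteq> -1" if "i < k" for i
  proof
    assume h: "height (take i r) = -1"
    have "i \<le> length r" using that k(1) by simp
    then have "k \<le> i" unfolding k_def using h by (intro Least_le) auto
    then show False using that by simp
  qed
  define u where "u = take k r"
  define v where "v = drop k r"
  have "u \<in> Fw" unfolding Fw_iff
  proof safe
    show "height u = -1" using k u_def by simp
    fix i assume i: "i < length u"
    then have "i < k" "i < length r" using u_def k by auto
    then have "height (take i r) \<noteq> -1" "-1 \<le> height (take i r)" using kmin pr by auto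
    then show "0 \<le> height (take i u)" using u_def \<open>i < k\<close> by simp
  qed
  moreover have "v \<in> Fw" unfolding Fw_iff
  proof safe
    have "r = u @ v" using u_def v_def by simp
    then have "height r = height u + height v" by simp
    moreover have "height u = -1" using k u_def by simp
    ultimately show "height v = -1" using hr by simp
    fix i assume i: "i < length v"
    then have "k + i < length r" using v_def by simp
    then have "-1 \<le> height (take (k + i) r)" using pr by simp
    moreover have "take (k + i) r = u @ take i v" using u_def v_def k
      by (metis append_take_drop_id take_add)
    ultimately show "0 \<le> height (take i v)" using k u_def by simp
  qed
  moreover have "w = S # u @ v" using wr \<open>x = S\<close> u_def v_def by simp
  ultimately show ?thesis by blast
qed

lemma Fw_prefix:
  assumes "u \<in> Fw" "u' \<in> Fw" "u @ v = u' @ v'" "length u \<le> length u'"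
  shows "u = u'"
proof (rule ccontr)
  assume "u \<noteq> u'"
  then have "length u \<noteq> length u'" using assms(3) append_eq_append_conv by blast
  then have "length u < length u'" using assms(4) by simp
  moreover have "take (length u) (u @ v) = take (length u) (u' @ v')" using assms(3) by simp
  then have "take (length u) u' = u" using assms(4) by simp
  ultimately have "0 \<le> height u" using assms(2) unfolding Fw_iff by metis
  then show False using assms(1) unfolding Fw_iff by simp
qed

lemma Fw_inj: "inj_on (\<lambda>(u, v). S # u @ v) (Fw \<times> Fw)"
proof (rule inj_onI, clarify)
  fix u v u' v' assume a: "u \<in> Fw" "v \<in> Fw" "u' \<in> Fw" "v' \<in> Fw" "u @ v = u' @ v'"
  have "u = u'"
  proof (cases "length u \<le> length u'")
    case True then show ?thesis using Fw_prefix a by blast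
  next
    case False then show ?thesis using Fw_prefix[of u' u v' v] a by simp
  qed
  then show "u = u' \<and> v = v'" using a by simp
qed

lemma Fw_eq: "Fw = insert [H] ((\<lambda>(u, v). S # u @ v) ` (Fw \<times> Fw))"
proof (intro equalityI subsetI)
  fix w assume w: "w \<in> Fw"
  show "w \<in> insert [H] ((\<lambda>(u, v). S # u @ v) ` (Fw \<times> Fw))"
  proof (cases "w = [H]")
    case False
    then obtain u v where uv: "u \<in> Fw" "v \<in> Fw" "w = S # u @ v" using Fw_decomp w by blast
    then have "w = (\<lambda>(u, v). S # u @ v) (u, v)" by simp
    then show ?thesis using uv(1,2) by blast
  qed simp
qed (auto simp: H_in_Fw Cons_in_Fw)

lemma H_notin: "[H] \<notin> (\<lambda>(u, v). S # u @ v) ` (Fw \<times> Fw)"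
  by auto



fun cnt :: "int \<Rightarrow> int \<Rightarrow> letter list \<Rightarrow> nat" where
  "cnt m h [] = 0"
| "cnt m h (S # w) = cnt m (h + 1) w"
| "cnt m h (H # w) = (if h - 1 < m then 1 else 0) + cnt m (h - 1) w"

lemma cnt_append: "cnt m h (u @ v) = cnt m h u + cnt m (h + height u) v"
proof (induction u arbitrary: h)
  case (Cons x u) then show ?case by (cases x) (simp_all add: algebra_simps)
qed simp

lemma cnt_shift: "cnt m (h + d) u = cnt (m - d) h u"
proof (induction u arbitrary: h)
  case Nil then show ?case by simp
next
  case (Cons x u)
  then show ?case
  proof (cases x)
    case S then show ?thesis using Cons.IH[of "h + 1"] by (simp add: algebra_simps)
  next
    case H then show ?thesis using Cons.IH[of "h - 1"] by (simp add: algebra_simps)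
  qed
qed

lemma cnt_S: "u \<in> Fw \<Longrightarrow> cnt m 0 (S # u @ v) = cnt (m - 1) 0 u + cnt m 0 v"
  using cnt_shift[of m 0 1 u] by (simp add: cnt_append Fw_iff)

lemma cnt_H: "cnt m 0 [H] = (if 0 \<le> m then 1 else 0)"
  by simp

lemma cnt_neg: "w \<in> Fw \<Longrightarrow> m \<le> -1 \<Longrightarrow> cnt m 0 w = 0"
proof (induction "length w" arbitrary: w m rule: less_induct)
  case less
  show ?case
  proof (cases "w = [H]")
    case True then show ?thesis using less by simp
  next
    case False
    then obtain u v where uv: "u \<in> Fw" "v \<in> Fw" "w = S # u @ v" using Fw_decomp less by blast
    then show ?thesis using cnt_S[OF uv(1)] less by simp
  qed
qed

lemma cnt_card:
  "card {i \<in> {1..length w}. h + height (take i w) < m \<and> height (take i w) < height (take (i - 1) w)}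
   = cnt m h w"
proof (induction w rule: rev_induct)
  case Nil then show ?case by simp
next
  case (snoc x w)
  let ?P = "\<lambda>w i. h + height (take i w) < m \<and> height (take i w) < height (take (i - 1) w)"
  have eq: "{i \<in> {1..length (w @ [x])}. ?P (w @ [x]) i}
      = {i \<in> {1..length w}. ?P w i} \<union> (if ?P (w @ [x]) (Suc (length w)) then {Suc (length w)} else {})"
    by (auto simp: le_Suc_eq)
  have c: "card ({i \<in> {1..length w}. ?P w i} \<union> (if ?P (w @ [x]) (Suc (length w)) then {Suc (length w)} else {}))
     = card {i \<in> {1..length w}. ?P w i} + (if ?P (w @ [x]) (Suc (length w)) then 1 else 0)"
    by (subst card_Un_disjoint) auto
  have "cnt m h (w @ [x]) = cnt m h w + (if ?P (w @ [x]) (Suc (length w)) then 1 else 0)"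
    by (cases x) (auto simp: cnt_append)
  then show ?case using eq c snoc by simp
qed

definition wt :: "real \<Rightarrow> real \<Rightarrow> letter list \<Rightarrow> real" where
  "wt p q w = prod_list (map (\<lambda>l. if l = S then q else p) w)"

lemma wt_Cons_S: "wt p q (S # u @ v) = q * (wt p q u * wt p q v)"
  by (simp add: wt_def)

lemma wt_H: "wt p q [H] = p" by (simp add: wt_def)

lemma wt_nonneg: "0 \<le> p \<Longrightarrow> 0 \<le> q \<Longrightarrow> 0 \<le> wt p q w"
  unfolding wt_def by (induction w) auto

lemma wt_count: "wt p q w = q ^ length (filter (\<lambda>l. l = S) w) * p ^ length (filter (\<lambda>l. l = H) w)"
proof (induction w)
  case (Cons x w) then show ?case by (cases x) (auto simp: wt_def)
qed (simp add: wt_def)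

lemma height_count: "height w = int (length (filter (\<lambda>l. l = S) w)) - int (length (filter (\<lambda>l. l = H) w))"
proof (induction w)
  case (Cons x w) then show ?case by (cases x) auto
qed simp

lemma length_count: "length w = length (filter (\<lambda>l. l = S) w) + length (filter (\<lambda>l. l = H) w)"
proof (induction w)
  case (Cons x w) then show ?case by (cases x) auto
qed simp

lemma cycle_prob_eq:
  assumes "w \<in> Fw"
  shows "cycle_prob p q ([S, S] @ w) = q^2 * wt p q w"
proof -
  obtain w' where w: "w = w' @ [H]" "dyck w'" using assms unfolding Fw_def by blast
  let ?a = "length (filter (\<lambda>l. l = S) w')" and ?b = "length (filter (\<lambda>l. l = H) w')"
  have "?a = ?b" using w(2) height_count[of w'] by (simp add: dyck_def)
  then have "length w' div 2 = ?a" using length_count[of w'] by simp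
  then have "cycle_prob p q ([S, S] @ w) = q^2 * p * (p * q) ^ ?a"
    by (simp add: cycle_prob_def w)
  also have "\<dots> = q^2 * wt p q w"
    using \<open>?a = ?b\<close> by (simp add: w wt_count power_mult_distrib)
  finally show ?thesis .
qed

lemma Hcount_eq: "Hcount n1 ([S, S] @ w) = cnt (int n1 - 2) 0 w"
  unfolding Hcount_def Xpos_def using cnt_card[of w 0 "int n1 - 2"] by simp



lemma has_sum_le_finite:
  fixes a :: "'a \<Rightarrow> real"
  assumes "(a has_sum A) X" "\<And>x. x \<in> X \<Longrightarrow> 0 \<le> a x" "finite G" "G \<subseteq> X"
  shows "sum a G \<le> A"
  using has_sum_mono_neutral[OF has_sum_finite[OF assms(3)] assms(1)] assms by auto

lemma sum_prod_split: "(\<Sum>(u, v)\<in>A \<times> B. (a u :: real) * b v) = sum a A * sum b B"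
  by (simp add: sum_product sum.cartesian_product)

lemma prod_has_sum:
  fixes a b :: "'a \<Rightarrow> real"
  assumes "(a has_sum A) X" "(b has_sum B) Y" "\<And>x. x \<in> X \<Longrightarrow> 0 \<le> a x" "\<And>y. y \<in> Y \<Longrightarrow> 0 \<le> b y"
  shows "((\<lambda>(u, v). a u * b v) has_sum (A * B)) (X \<times> Y)"
proof (rule has_sum_SigmaI[where g = "\<lambda>u. a u * B"])
  show "((\<lambda>u. a u * B) has_sum A * B) X" using has_sum_cmult_left[OF assms(1)] by simp
  show "((\<lambda>y. (\<lambda>(u, v). a u * b v) (x, y)) has_sum a x * B) Y" if "x \<in> X" for x
    using has_sum_cmult_right[OF assms(2), of "a x"] by simp
  have A0: "0 \<le> A" using has_sum_nonneg assms by blast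
  have B0: "0 \<le> B" using has_sum_nonneg assms by blast
  show "(\<lambda>(u, v). a u * b v) summable_on X \<times> Y"
  proof (rule nonneg_bdd_above_summable_on)
    show "0 \<le> (\<lambda>(u, v). a u * b v) x" if "x \<in> X \<times> Y" for x
      using that assms(3,4) by auto
    show "bdd_above (sum (\<lambda>(u, v). a u * b v) ` {F. F \<subseteq> X \<times> Y \<and> finite F})"
    proof (rule bdd_aboveI2)
      fix G assume G: "G \<in> {F. F \<subseteq> X \<times> Y \<and> finite F}"
      then have fG: "finite (fst ` G \<times> snd ` G)" "G \<subseteq> fst ` G \<times> snd ` G" "fst ` G \<subseteq> X" "snd ` G \<subseteq> Y"
        by force+
      have b0: "0 \<le> sum b (snd ` G)" using fG(4) assms(4) by (intro sum_nonneg) auto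
      have "sum (\<lambda>(u, v). a u * b v) G \<le> sum (\<lambda>(u, v). a u * b v) (fst ` G \<times> snd ` G)"
      proof (intro sum_mono2 fG(1,2))
        fix z assume "z \<in> fst ` G \<times> snd ` G - G"
        then have "fst z \<in> X" "snd z \<in> Y" using fG by auto
        then show "0 \<le> (\<lambda>(u, v). a u * b v) z" using assms(3,4) by (auto simp: case_prod_unfold)
      qed
      also have "\<dots> = sum a (fst ` G) * sum b (snd ` G)" by (rule sum_prod_split)
      also have "\<dots> \<le> A * B"
        using has_sum_le_finite[OF assms(1,3)] has_sum_le_finite[OF assms(2,4)] fG G A0
          b0 by (intro mult_mono) auto
      finally show "sum (\<lambda>(u, v). a u * b v) G \<le> A * B" .
    qed
  qed
qed

lemma decomp_has_sum:
  fixes \<phi> :: "letter list \<Rightarrow> real"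
  assumes "(\<phi> has_sum s) Fw" "((\<lambda>(u, v). \<phi> (S # u @ v)) has_sum t) (Fw \<times> Fw)"
  shows "s = \<phi> [H] + t"
proof -
  have "(\<phi> has_sum t) ((\<lambda>(u, v). S # u @ v) ` (Fw \<times> Fw))"
    using has_sum_reindex[OF Fw_inj, of \<phi> t] assms(2) by (simp add: comp_def case_prod_unfold)
  moreover have "(\<phi> has_sum \<phi> [H]) {[H]}" using has_sum_finite[of "{[H]}" \<phi>] by simp
  ultimately have "(\<phi> has_sum (\<phi> [H] + t)) ({[H]} \<union> (\<lambda>(u, v). S # u @ v) ` (Fw \<times> Fw))"
    using H_notin by (intro has_sum_Un_disjoint) auto
  then have "(\<phi> has_sum (\<phi> [H] + t)) Fw" using Fw_eq by simp
  then show ?thesis using assms(1) has_sum_unique by blast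
qed

definition FN :: "nat \<Rightarrow> letter list set" where "FN N = {w \<in> Fw. length w \<le> N}"

lemma UNIV_letter: "(UNIV :: letter set) = {S, H}"
  using letter.exhaust by auto

lemma finite_FN: "finite (FN N)"
proof -
  have "finite {xs :: letter list. set xs \<subseteq> UNIV \<and> length xs \<le> N}"
    by (rule finite_lists_length_le) (simp add: UNIV_letter)
  then show ?thesis unfolding FN_def by (rule rev_finite_subset) auto
qed

lemma FN_0: "FN 0 = {}" using Fw_ne by (auto simp: FN_def)

lemma FN_Suc_sub: "FN (Suc N) \<subseteq> insert [H] ((\<lambda>(u, v). S # u @ v) ` (FN N \<times> FN N))"
proof
  fix w assume "w \<in> FN (Suc N)"
  then have w: "w \<in> Fw" "length w \<le> Suc N" by (auto simp: FN_def)
  show "w \<in> insert [H] ((\<lambda>(u, v). S # u @ v) ` (FN N \<times> FN N))"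
  proof (cases "w = [H]")
    case False
    then obtain u v where "u \<in> Fw" "v \<in> Fw" "w = S # u @ v" using Fw_decomp w by blast
    then show ?thesis using w by (force simp: FN_def)
  qed simp
qed

lemma trunc_step:
  fixes \<phi> :: "letter list \<Rightarrow> real"
  assumes "\<And>w. w \<in> Fw \<Longrightarrow> 0 \<le> \<phi> w"
  shows "sum \<phi> (FN (Suc N)) \<le> \<phi> [H] + (\<Sum>(u, v)\<in>FN N \<times> FN N. \<phi> (S # u @ v))"
proof -
  have sub: "FN N \<times> FN N \<subseteq> Fw \<times> Fw" by (auto simp: FN_def)
  have inj: "inj_on (\<lambda>(u, v). S # u @ v) (FN N \<times> FN N)" using Fw_inj sub inj_on_subset by blast
  have fin: "finite (insert [H] ((\<lambda>(u, v). S # u @ v) ` (FN N \<times> FN N)))" using finite_FN by simp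
  have "sum \<phi> (FN (Suc N)) \<le> sum \<phi> (insert [H] ((\<lambda>(u, v). S # u @ v) ` (FN N \<times> FN N)))"
    using assms Cons_in_Fw H_in_Fw sub fin by (intro sum_mono2[OF fin FN_Suc_sub]) auto
  also have "\<dots> = \<phi> [H] + sum \<phi> ((\<lambda>(u, v). S # u @ v) ` (FN N \<times> FN N))"
    using finite_FN by (subst sum.insert) auto
  also have "\<dots> = \<phi> [H] + (\<Sum>(u, v)\<in>FN N \<times> FN N. \<phi> (S # u @ v))"
    using sum.reindex[OF inj, of \<phi>] by (simp add: comp_def case_prod_unfold)
  finally show ?thesis .
qed

lemma trunc_summable:
  fixes \<phi> :: "letter list \<Rightarrow> real"
  assumes "\<And>w. w \<in> Fw \<Longrightarrow> 0 \<le> \<phi> w" "\<And>N. sum \<phi> (FN N) \<le> C"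
  shows "\<phi> summable_on Fw"
proof (rule nonneg_bdd_above_summable_on)
  show "bdd_above (sum \<phi> ` {F. F \<subseteq> Fw \<and> finite F})"
  proof (rule bdd_aboveI2)
    fix G assume G: "G \<in> {F. F \<subseteq> Fw \<and> finite F}"
    define N where "N = Max (length ` G)"
    have "G \<subseteq> FN N" using G unfolding FN_def N_def by auto
    then have "sum \<phi> G \<le> sum \<phi> (FN N)" using assms finite_FN by (intro sum_mono2) (auto simp: FN_def)
    then show "sum \<phi> G \<le> C" using assms(2) by (meson order_trans)
  qed
qed (use assms in auto)



lemma has_sum_le_bound:
  fixes f :: "'a \<Rightarrow> real"
  assumes "(f has_sum s) A" "\<And>G. finite G \<Longrightarrow> G \<subseteq> A \<Longrightarrow> sum f G \<le> C"
  shows "s \<le> C"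
proof -
  have "(sum f \<longlongrightarrow> s) (finite_subsets_at_top A)" using assms(1) by (simp add: has_sum_def)
  moreover have "eventually (\<lambda>G. sum f G \<le> C) (finite_subsets_at_top A)"
    using assms(2) by (auto simp: eventually_finite_subsets_at_top)
  ultimately show ?thesis using tendsto_upperbound finite_subsets_at_top_neq_bot by blast
qed

lemma FN_cover: "finite G \<Longrightarrow> G \<subseteq> Fw \<Longrightarrow> G \<subseteq> FN (Max (length ` G))"
  unfolding FN_def by auto

lemma FN_sub: "FN N \<subseteq> Fw" by (auto simp: FN_def)

locale pq =
  fixes p q :: real
  assumes pq1: "p + q = 1" and q0: "0 < q" and qp: "q < p"
begin

lemma p0: "0 < p" using q0 qp by simp

lemma wt0: "0 \<le> wt p q w" using wt_nonneg p0 q0 by simp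

lemma Phi_trunc: "sum (wt p q) (FN N) \<le> 1"
proof (induction N)
  case 0 then show ?case by (simp add: FN_0)
next
  case (Suc N)
  let ?s = "sum (wt p q) (FN N)"
  have s0: "0 \<le> ?s" using wt0 by (simp add: sum_nonneg)
  have "sum (wt p q) (FN (Suc N)) \<le> wt p q [H] + (\<Sum>(u, v)\<in>FN N \<times> FN N. wt p q (S # u @ v))"
    using trunc_step wt0 by blast
  also have "\<dots> = p + q * (?s * ?s)"
    by (simp add: wt_Cons_S wt_H sum_distrib_left[symmetric] sum_prod_split[of "wt p q" "wt p q", symmetric]
        case_prod_unfold)
  also have "\<dots> \<le> p + q * 1"
    using Suc s0 q0 by (intro add_left_mono mult_left_mono) (auto intro: mult_le_one)
  finally show ?case using pq1 by simp
qed

lemma Phi_summable: "wt p q summable_on Fw"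
  using trunc_summable[of "wt p q" 1] wt0 Phi_trunc by blast

lemma Phi_has_sum: "(wt p q has_sum 1) Fw"
proof -
  define \<Phi> where "\<Phi> = infsum (wt p q) Fw"
  have hs: "(wt p q has_sum \<Phi>) Fw" using Phi_summable \<Phi>_def by simp
  have "\<Phi> \<le> 1"
  proof (rule has_sum_le_bound[OF hs])
    fix G assume G: "finite G" "G \<subseteq> Fw"
    then have "sum (wt p q) G \<le> sum (wt p q) (FN (Max (length ` G)))"
      using FN_cover[OF G] finite_FN wt0 by (intro sum_mono2) auto
    then show "sum (wt p q) G \<le> 1" using Phi_trunc order_trans by blast
  qed
  have "((\<lambda>(u, v). wt p q (S # u @ v)) has_sum q * (\<Phi> * \<Phi>)) (Fw \<times> Fw)"
    using has_sum_cmult_right[OF prod_has_sum[OF hs hs wt0 wt0], of q]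
    by (simp add: wt_Cons_S case_prod_unfold)
  then have "\<Phi> = wt p q [H] + q * (\<Phi> * \<Phi>)" by (rule decomp_has_sum[OF hs])
  then have e: "\<Phi> = p + q * (\<Phi> * \<Phi>)" by (simp only: wt_H)
  have "(\<Phi> - 1) * (q * \<Phi> - p) = q * (\<Phi> * \<Phi>) - (p + q) * \<Phi> + p" by (simp add: algebra_simps)
  also have "(p + q) * \<Phi> = \<Phi>" using pq1 by simp
  finally have "(\<Phi> - 1) * (q * \<Phi> - p) = 0" using e by linarith
  moreover have "q * \<Phi> - p \<noteq> 0"
  proof
    assume "q * \<Phi> - p = 0"
    then have "q * \<Phi> = p" by simp
    moreover have "q * \<Phi> \<le> q" using \<open>\<Phi> \<le> 1\<close> q0 by simp
    ultimately show False using qp by simp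
  qed
  ultimately have "\<Phi> = 1" by simp
  then show ?thesis using hs by simp
qed

end



context pq
begin

abbreviation phi :: "int \<Rightarrow> letter list \<Rightarrow> real" where
  "phi m w \<equiv> wt p q w * real (cnt m 0 w)"

lemma phi0: "0 \<le> phi m w" using wt0 by simp

lemma phi_S:
  assumes "u \<in> Fw"
  shows "phi m (S # u @ v) = q * (phi (m - 1) u * wt p q v) + q * (wt p q u * phi m v)"
  using cnt_S[OF assms, of m v] by (simp add: wt_Cons_S algebra_simps)

lemma phi_H: "phi m [H] = (if 0 \<le> m then p else 0)"
  by (simp add: wt_H)

lemma T_trunc: "\<forall>m. sum (phi m) (FN N) \<le> 1 / (p - q)"
proof (induction N)
  case 0 then show ?case using qp by (simp add: FN_0)
next
  case (Suc N)
  show ?case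
  proof
    fix m
    let ?s = "sum (wt p q) (FN N)"
    have s0: "0 \<le> ?s" using wt0 by (simp add: sum_nonneg)
    have s1: "?s \<le> 1" using Phi_trunc .
    have a0: "0 \<le> sum (phi (m - 1)) (FN N)" "0 \<le> sum (phi m) (FN N)"
      using phi0 by (simp_all add: sum_nonneg)
    have "sum (phi m) (FN (Suc N)) \<le> phi m [H] + (\<Sum>(u, v)\<in>FN N \<times> FN N. phi m (S # u @ v))"
      using trunc_step[of "phi m"] phi0 by blast
    also have "(\<Sum>(u, v)\<in>FN N \<times> FN N. phi m (S # u @ v))
       = (\<Sum>(u, v)\<in>FN N \<times> FN N. q * (phi (m - 1) u * wt p q v) + q * (wt p q u * phi m v))"
    proof (intro sum.cong refl, clarify)
      fix u v assume "u \<in> FN N"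
      then have "u \<in> Fw" using FN_sub by blast
      then show "phi m (S # u @ v) = q * (phi (m - 1) u * wt p q v) + q * (wt p q u * phi m v)"
        by (rule phi_S)
    qed
    also have "\<dots> = q * (sum (phi (m - 1)) (FN N) * ?s) + q * (?s * sum (phi m) (FN N))"
      by (simp add: sum.distrib case_prod_unfold sum_distrib_left[symmetric]
          sum_prod_split[of "phi (m - 1)" "wt p q", symmetric, unfolded case_prod_unfold]
          sum_prod_split[of "wt p q" "phi m", symmetric, unfolded case_prod_unfold])
    also have "\<dots> \<le> q * (1 / (p - q)) + q * (1 / (p - q))"
    proof -
      have "sum (phi (m - 1)) (FN N) * ?s \<le> 1 / (p - q)"
        using Suc[rule_format, of "m - 1"] s0 s1 a0 by (metis mult_right_le_one_le order_trans)
      moreover have "?s * sum (phi m) (FN N) \<le> 1 / (p - q)"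
        using Suc[rule_format, of m] s0 s1 a0 by (metis mult_left_le_one_le order_trans)
      ultimately show ?thesis using q0 by (intro add_mono mult_left_mono) auto
    qed
    finally have "sum (phi m) (FN (Suc N)) \<le> phi m [H] + 2 * q / (p - q)" by simp
    moreover have "phi m [H] \<le> p" using phi_H p0 by simp
    moreover have "p + 2 * q / (p - q) = 1 / (p - q) * (p * (p - q) + 2 * q)"
      using qp by (simp add: field_simps)
    moreover have "p * (p - q) + 2 * q \<le> 1"
    proof -
      have "p * (p - q) + 2 * q = p * (p - q) + 2 * q * (p + q)" using pq1 by simp
      also have "\<dots> \<le> (p + q) * (p + q)" using q0 qp by (simp add: algebra_simps)
      finally show ?thesis using pq1 by simp
    qed
    moreover have "0 < 1 / (p - q)" using qp by simp
    ultimately show "sum (phi m) (FN (Suc N)) \<le> 1 / (p - q)"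
      by (smt (verit) mult_left_le)
  qed
qed

lemma g_summable: "phi m summable_on Fw"
  using trunc_summable[of "phi m" "1 / (p - q)"] phi0 T_trunc by blast

definition g :: "int \<Rightarrow> real" where "g m = infsum (phi m) Fw"

lemma g_has_sum: "(phi m has_sum g m) Fw"
  using g_summable g_def by simp

lemma g_rec: "g m = (if 0 \<le> m then 1 else 0) + (q / p) * g (m - 1)"
proof -
  have h1: "((\<lambda>(u, v). q * (phi (m - 1) u * wt p q v)) has_sum q * (g (m - 1) * 1)) (Fw \<times> Fw)"
    using has_sum_cmult_right[OF prod_has_sum[OF g_has_sum Phi_has_sum phi0 wt0], of q]
    by (simp add: case_prod_unfold)
  have h2: "((\<lambda>(u, v). q * (wt p q u * phi m v)) has_sum q * (1 * g m)) (Fw \<times> Fw)"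
    using has_sum_cmult_right[OF prod_has_sum[OF Phi_has_sum g_has_sum wt0 phi0], of q]
    by (simp add: case_prod_unfold)
  have "((\<lambda>(u, v). phi m (S # u @ v)) has_sum (q * (g (m - 1) * 1) + q * (1 * g m))) (Fw \<times> Fw)"
  proof -
    have "((\<lambda>x. (\<lambda>(u, v). q * (phi (m - 1) u * wt p q v)) x + (\<lambda>(u, v). q * (wt p q u * phi m v)) x)
        has_sum (q * (g (m - 1) * 1) + q * (1 * g m))) (Fw \<times> Fw)"
      by (rule has_sum_add[OF h1 h2])
    then show ?thesis
      by (rule has_sum_cong[THEN iffD1, rotated]) (clarify, rule phi_S[symmetric], simp)
  qed
  then have "g m = phi m [H] + (q * (g (m - 1) * 1) + q * (1 * g m))"
    by (rule decomp_has_sum[OF g_has_sum])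
  then have "g m = (if 0 \<le> m then p else 0) + q * g (m - 1) + q * g m"
    by (simp only: phi_H mult_1_right mult_1_left add.assoc)
  then have "p * g m = (if 0 \<le> m then p else 0) + q * g (m - 1)"
  proof -
    have "p = 1 - q" using pq1 by simp
    then have "p * g m = g m - q * g m" by (simp add: left_diff_distrib)
    then show ?thesis using \<open>g m = (if 0 \<le> m then p else 0) + q * g (m - 1) + q * g m\<close> by linarith
  qed
  then show ?thesis using p0 by (simp add: field_simps split: if_splits)
qed

lemma g_neg: "m \<le> -1 \<Longrightarrow> g m = 0"
proof -
  assume "m \<le> -1"
  then have "((\<lambda>w. 0) has_sum 0) Fw" by simp
  then have "(phi m has_sum 0) Fw"
    by (rule has_sum_cong[THEN iffD1, rotated]) (simp add: cnt_neg \<open>m \<le> -1\<close>)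
  then show ?thesis using g_has_sum has_sum_unique by blast
qed

lemma g_nat: "g (int n - 1) = (\<Sum>k<n. (q / p) ^ k)"
proof (induction n)
  case 0 then show ?case using g_neg by simp
next
  case (Suc n)
  have "g (int (Suc n) - 1) = 1 + (q / p) * g (int n - 1)"
    using g_rec[of "int (Suc n) - 1"] by simp
  also have "\<dots> = 1 + (\<Sum>k<n. (q / p) ^ Suc k)"
    using Suc by (simp add: sum_distrib_left)
  also have "\<dots> = (\<Sum>k<Suc n. (q / p) ^ k)"
    by (simp only: sum.lessThan_Suc_shift power_0)
  finally show ?case .
qed

end



theorem proposition6:
  fixes p q :: real and n1 :: nat
  assumes "p + q = 1" and "0 < q" and "q < p" and "n1 \<ge> 2"
  shows "(\<Sum>\<^sub>\<infinity>\<omega>\<in>SS_cycles. cycle_prob p q \<omega> * real (Hcount n1 \<omega>))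
           / (\<Sum>\<^sub>\<infinity>\<omega>\<in>SS_cycles. cycle_prob p q \<omega>)
         = p / (p - q) * (1 - (q / p) ^ (n1 - 1))"
proof -
  interpret pq p q using assms by unfold_locales auto
  have SS: "SS_cycles = (\<lambda>w. [S, S] @ w) ` Fw" unfolding SS_cycles_def Fw_def by auto
  have inj: "inj_on (\<lambda>w. [S, S] @ w) Fw" by (auto intro: inj_onI)
  let ?m = "int n1 - 2"
  have "((\<lambda>w. q^2 * phi ?m w) has_sum q^2 * g ?m) Fw"
    by (rule has_sum_cmult_right[OF g_has_sum])
  then have "(((\<lambda>\<omega>. cycle_prob p q \<omega> * real (Hcount n1 \<omega>)) \<circ> (\<lambda>w. [S, S] @ w)) has_sum q^2 * g ?m) Fw"
    by (rule has_sum_cong[THEN iffD1, rotated]) (simp add: cycle_prob_eq[simplified] Hcount_eq[simplified])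
  then have "((\<lambda>\<omega>. cycle_prob p q \<omega> * real (Hcount n1 \<omega>)) has_sum q^2 * g ?m) SS_cycles"
    unfolding SS using has_sum_reindex[OF inj] by blast
  then have num: "(\<Sum>\<^sub>\<infinity>\<omega>\<in>SS_cycles. cycle_prob p q \<omega> * real (Hcount n1 \<omega>)) = q^2 * g ?m"
    by (rule infsumI)
  have "((\<lambda>w. q^2 * wt p q w) has_sum q^2 * 1) Fw"
    by (rule has_sum_cmult_right[OF Phi_has_sum])
  then have "((cycle_prob p q \<circ> (\<lambda>w. [S, S] @ w)) has_sum q^2 * 1) Fw"
    by (rule has_sum_cong[THEN iffD1, rotated]) (simp add: cycle_prob_eq[simplified])
  then have "(cycle_prob p q has_sum q^2 * 1) SS_cycles"
    unfolding SS using has_sum_reindex[OF inj] by blast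
  then have den: "(\<Sum>\<^sub>\<infinity>\<omega>\<in>SS_cycles. cycle_prob p q \<omega>) = q^2"
    by (simp add: infsumI)
  have "?m = int (n1 - 1) - 1" using assms(4) by simp
  then have "g ?m = g (int (n1 - 1) - 1)" by (rule arg_cong)
  then have gm: "g ?m = (\<Sum>k<n1 - 1. (q / p) ^ k)" using g_nat[of "n1 - 1"] by (simp only:)
  have r1: "q / p \<noteq> 1" using assms by simp
  have "(\<Sum>k<n1 - 1. (q / p) ^ k) = (1 - (q / p) ^ (n1 - 1)) / (1 - q / p)"
    using sum_gp_strict[of "q / p" "n1 - 1"] r1 by (simp only: if_False)
  also have "\<dots> = p / (p - q) * (1 - (q / p) ^ (n1 - 1))"
    using assms by (simp add: field_simps)
  finally show ?thesis using num den gm assms(2) by simp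
qed


end
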